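(* For every $n\in\mathbb{N}_{\geq1}$, the GFB tree $T_n^{gfb}$ with $n$ leaves has minimal Colless index, i.e. $\mathcal{C}(T_n^{gfb})=c_n$, where $c_n$ is the minimum of $\mathcal{C}(T)$ over all rooted binary trees $T$ with $n$ leaves.
   Context: A rooted binary tree with $n\geq 2$ leaves is a rooted tree whose root has degree 2 and all other internal nodes have degree 3; for $n=1$ it is a single node. Trees are considered up to isomorphism. For an internal node $v$ with children $v_1,v_2$, let $\kappa(v_i)$ be the number of leaves descending from $v_i$ ($1$ if $v_i$ is a leaf). The Colless index is $\mathcal{C}(T)=\sum_v|\kappa(v_1)-\kappa(v_2)|$ over internal nodes $v$. The size of a tree is its number of leaves. The greedy from the bottom (GFB) tree $T_n^{gfb}$ is the output of the following procedure: start with a multiset of $n$ single-node trees; while the multiset contains more than one tree, remove a tree $u$ of minimal size, then remove a tree $v$ of minimal size among the remaining ones, and insert the tree consisting of a new root whose two children are the roots of $u$ and $v$; output the single remaining tree. (The output is unique up to isomorphism.) *)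

theory Defs
  imports Main "HOL-Library.Multiset"
begin

text \<open>Rooted binary trees (up to isomorphism: we work with ordered trees;
  the Colless index and the leaf count are invariant under swapping children).\<close>
datatype btree = Leaf | Node btree btree

fun leaves :: "btree \<Rightarrow> nat" where
  "leaves Leaf = 1"
| "leaves (Node l r) = leaves l + leaves r"

fun colless :: "btree \<Rightarrow> nat" where
  "colless Leaf = 0"
| "colless (Node l r) =
     nat \<bar>int (leaves l) - int (leaves r)\<bar> + colless l + colless r"

text \<open>A run of the greedy-from-the-bottom procedure starting from multiset M
  and ending with the single tree t. Ties may be broken arbitrarily.\<close>
inductive gfb_run :: "btree multiset \<Rightarrow> btree \<Rightarrow> bool" where
  finish: "gfb_run {#t#} t"
| step: "\<lbrakk> u \<in># M; \<forall>w\<in>#M. leaves u \<le> leaves w;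
           v \<in># M - {#u#}; \<forall>w\<in>#M - {#u#}. leaves v \<le> leaves w;
           gfb_run (add_mset (Node u v) (M - {#u#} - {#v#})) t \<rbrakk>
         \<Longrightarrow> gfb_run M t"

definition is_gfb :: "nat \<Rightarrow> btree \<Rightarrow> bool" where
  "is_gfb n t \<longleftrightarrow> gfb_run (replicate_mset n Leaf) t"

definition min_colless :: "nat \<Rightarrow> nat" where
  "min_colless n = Min {colless t | t. leaves t = n}"

end

theory Submission imports Defs begin

lemma half_less: "\<not> n \<le> Suc 0 \<Longrightarrow> n div 2 + n mod 2 < (n::nat)" by presburger

function phi :: "nat \<Rightarrow> nat" where
  "phi n = (if n \<le> 1 then 0 else n mod 2 + phi (n div 2 + n mod 2) + phi (n div 2))"
  by auto
termination by (relation "measure id") (auto simp: half_less)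

declare phi.simps [simp del]

lemma phi_0 [simp]: "phi 0 = 0" by (simp add: phi.simps)
lemma phi_1 [simp]: "phi 1 = 0" by (simp add: phi.simps)
lemma phi_even: "phi (2*x) = 2 * phi x"
proof (cases "x = 0")
  case False then show ?thesis by (subst phi.simps) simp
qed simp
lemma phi_odd: "x \<ge> 1 \<Longrightarrow> phi (2*x+1) = 1 + phi (x+1) + phi x"
  by (subst phi.simps) simp
lemma phi_ge2: "x \<ge> 2 \<Longrightarrow> phi x = x mod 2 + phi (x div 2 + x mod 2) + phi (x div 2)"
  by (subst phi.simps) simp

lemma phi_Suc0 [simp]: "phi (Suc 0) = 0" by (simp add: phi.simps)
lemma phi_2 [simp]: "phi 2 = 0" using phi_even[of 1] by simp
lemma phi_2b [simp]: "phi (Suc (Suc 0)) = 0" by (metis phi_2 numeral_2_eq_2)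
lemma phi_3 [simp]: "phi 3 = 1"
proof -
  have "phi (2*1+1) = 1 + phi (1+1) + phi 1" by (rule phi_odd) simp
  then show ?thesis by simp
qed

definition dd :: "nat \<Rightarrow> nat \<Rightarrow> nat" where "dd a b = nat \<bar>int a - int b\<bar>"

lemma dd_le: "b \<le> a \<Longrightarrow> dd a b = a - b"
proof -
  assume h: "b \<le> a"
  then have "int a - int b = int (a - b)" by (simp add: of_nat_diff)
  then show ?thesis unfolding dd_def by (simp only: abs_of_nat nat_int)
qed

lemma dd_comm: "dd a b = dd b a" by (simp add: dd_def abs_minus_commute)

lemma dd_alt: "dd a b = (if b \<le> a then a - b else b - a)"
proof (cases "b \<le> a")
  case True then show ?thesis by (simp add: dd_le)
next
  case False
  then have ab: "a \<le> b" by simp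
  have "dd a b = dd b a" by (rule dd_comm)
  also have "\<dots> = b - a" using ab by (rule dd_le)
  finally show ?thesis using False by simp
qed
lemma phi_sub: "phi (a+b) \<le> dd a b + phi a + phi b"
proof (induction "a+b" arbitrary: a b rule: less_induct)
  case less
  show ?case
  proof (cases "a = 0 \<or> b = 0")
    case True then show ?thesis by (auto simp: dd_def)
  next
    case False
    then have a1: "a \<ge> 1" and b1: "b \<ge> 1" by auto
    obtain a' where a': "a = 2*a' \<or> a = 2*a'+1" by (metis odd_two_times_div_two_succ even_two_times_div_two)
    obtain b' where b': "b = 2*b' \<or> b = 2*b'+1" by (metis odd_two_times_div_two_succ even_two_times_div_two)
    consider (ee) "a = 2*a'" "b = 2*b'" | (oo) "a = 2*a'+1" "b = 2*b'+1"
      | (eo) "a = 2*a'" "b = 2*b'+1" | (oe) "a = 2*a'+1" "b = 2*b'" using a' b' by blast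
    then show ?thesis
    proof cases
      case ee
      have ih: "phi (a'+b') \<le> dd a' b' + phi a' + phi b'" by (rule less.hyps) (insert ee a1, simp)
      have "a + b = 2*(a'+b')" using ee by simp
      then have p: "phi (a+b) = 2 * phi (a'+b')" using phi_even by metis
      have d: "dd a b = 2 * dd a' b'" using ee by (simp add: dd_alt diff_mult_distrib2)
      have "phi a = 2 * phi a'" "phi b = 2 * phi b'" using ee phi_even by auto
      then show ?thesis using ih p d by linarith
    next
      case oo
      have s: "a + b = 2*(a'+b'+1)" using oo by simp
      show ?thesis
      proof (cases "a' = 0 \<or> b' = 0")
        case True
        then show ?thesis
        proof
          assume z: "a' = 0"
          show ?thesis
          proof (cases "b' = 0")
            case True then show ?thesis using z oo by (simp add: dd_def phi_2)
          next
            case False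
            have ih: "phi (b'+1) \<le> dd b' 1 + phi b' + phi 1" by (rule less.hyps) (insert oo z False, simp)
            have pb: "phi b = 1 + phi (b'+1) + phi b'" using oo False phi_odd by simp
            have ab: "a + b = 2*(b'+1)" using s z by simp
            have p: "phi (a+b) = 2*phi(b'+1)" using ab phi_even by metis
            have d1: "dd a b = 2*b'" using oo z unfolding dd_alt by (auto split: if_splits nat_diff_split)
            have d2: "dd b' 1 = b' - 1" using False by (simp add: dd_alt)
            show ?thesis using ih pb p d1 d2 False phi_1 by linarith
          qed
        next
          assume z: "b' = 0"
          show ?thesis
          proof (cases "a' = 0")
            case True then show ?thesis using z oo by (simp add: dd_def phi_2)
          next
            case False
            have ih: "phi (a'+1) \<le> dd a' 1 + phi a' + phi 1" by (rule less.hyps) (insert oo z False, simp)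
            have pa: "phi a = 1 + phi (a'+1) + phi a'" using oo False phi_odd by simp
            have ab: "a + b = 2*(a'+1)" using s z by simp
            have p: "phi (a+b) = 2*phi(a'+1)" using ab phi_even by metis
            have d1: "dd a b = 2*a'" using oo z unfolding dd_alt by (auto split: if_splits nat_diff_split)
            have d2: "dd a' 1 = a' - 1" using False by (simp add: dd_alt)
            show ?thesis using ih pa p d1 d2 False phi_1 by linarith
          qed
        qed
      next
        case False
        have ih1: "phi ((a'+1)+b') \<le> dd (a'+1) b' + phi (a'+1) + phi b'" by (rule less.hyps) (insert oo False, simp)
        have ih2: "phi (a'+(b'+1)) \<le> dd a' (b'+1) + phi a' + phi (b'+1)" by (rule less.hyps) (insert oo False, simp)
        have q1: "phi ((a'+1)+b') = phi (a'+b'+1)" by (simp add: ac_simps)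
        have q2: "phi (a'+(b'+1)) = phi (a'+b'+1)" by (simp add: ac_simps)
        have pa: "phi a = 1 + phi (a'+1) + phi a'" using oo False phi_odd by simp
        have pb: "phi b = 1 + phi (b'+1) + phi b'" using oo False phi_odd by simp
        have p: "phi (a+b) = 2 * phi (a'+b'+1)" using s phi_even by metis
        have d: "dd (a'+1) b' + dd a' (b'+1) \<le> dd a b + 2" using oo unfolding dd_alt by (auto split: if_splits nat_diff_split)
        show ?thesis using ih1 ih2 q1 q2 pa pb p d by linarith
      qed
    next
      case eo
      have a'1: "a' \<ge> 1" using eo a1 by simp
      have s: "a + b = 2*(a'+b')+1" using eo by simp
      have po: "phi (2*(a'+b')+1) = 1 + phi (a'+b'+1) + phi (a'+b')" using a'1 by (intro phi_odd) simp
      have ps: "phi (a+b) = 1 + phi (a'+b'+1) + phi (a'+b')" using s po by metis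
      have pa: "phi a = 2 * phi a'" using eo phi_even by metis
      show ?thesis
      proof (cases "b' = 0")
        case True
        have ih: "phi (a'+1) \<le> dd a' 1 + phi a' + phi 1" by (rule less.hyps) (insert eo True a'1, simp)
        have d1: "dd a b = 2*a' - 1" using eo True a'1 unfolding dd_alt by (auto split: if_splits nat_diff_split)
        have d2: "dd a' 1 = a' - 1" using a'1 by (simp add: dd_alt)
        have pb: "phi b = 0" using eo True by simp
        show ?thesis using ps ih d1 d2 pa pb True a'1 phi_1 by simp
      next
        case False
        have ih1: "phi (a'+(b'+1)) \<le> dd a' (b'+1) + phi a' + phi (b'+1)" by (rule less.hyps) (insert eo False, simp)
        have ih2: "phi (a'+b') \<le> dd a' b' + phi a' + phi b'" by (rule less.hyps) (insert eo False, simp)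
        have q: "phi (a'+(b'+1)) = phi (a'+b'+1)" by (simp add: ac_simps)
        have pb: "phi b = 1 + phi (b'+1) + phi b'" using eo False phi_odd by simp
        have d: "dd a' (b'+1) + dd a' b' \<le> dd a b" using eo unfolding dd_alt by (auto split: if_splits nat_diff_split)
        show ?thesis using ps ih1 ih2 q pa pb d by linarith
      qed
    next
      case oe
      have b'1: "b' \<ge> 1" using oe b1 by simp
      have s: "a + b = 2*(a'+b')+1" using oe by simp
      have po: "phi (2*(a'+b')+1) = 1 + phi (a'+b'+1) + phi (a'+b')" using b'1 by (intro phi_odd) simp
      have ps: "phi (a+b) = 1 + phi (a'+b'+1) + phi (a'+b')" using s po by metis
      have pb: "phi b = 2 * phi b'" using oe phi_even by metis
      show ?thesis
      proof (cases "a' = 0")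
        case True
        have ih: "phi (b'+1) \<le> dd b' 1 + phi b' + phi 1" by (rule less.hyps) (insert oe True b'1, simp)
        have d1: "dd a b = 2*b' - 1" using oe True b'1 unfolding dd_alt by (auto split: if_splits nat_diff_split)
        have d2: "dd b' 1 = b' - 1" using b'1 by (simp add: dd_alt)
        have pa: "phi a = 0" using oe True by simp
        have q: "phi (a'+b'+1) = phi (b'+1)" "phi (a'+b') = phi b'" using True by simp_all
        show ?thesis using ps ih d1 d2 pa pb q b'1 phi_1 by linarith
      next
        case False
        have ih1: "phi ((a'+1)+b') \<le> dd (a'+1) b' + phi (a'+1) + phi b'" by (rule less.hyps) (insert oe False, simp)
        have ih2: "phi (a'+b') \<le> dd a' b' + phi a' + phi b'" by (rule less.hyps) (insert oe False, simp)
        have q: "phi ((a'+1)+b') = phi (a'+b'+1)" by (simp add: ac_simps)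
        have pa: "phi a = 1 + phi (a'+1) + phi a'" using oe False phi_odd by simp
        have d: "dd (a'+1) b' + dd a' b' \<le> dd a b" using oe unfolding dd_alt by (auto split: if_splits nat_diff_split)
        show ?thesis using ps ih1 ih2 q pa pb d by linarith
      qed
    qed
  qed
qed

lemma phi_pow2 [simp]: "phi (2^j) = 0"
  by (induction j) (auto simp: phi_even)

lemma dd_split: "y \<le> x1 \<Longrightarrow> x1 \<le> y + 1 \<Longrightarrow> dd (2*Q) (x1+y) = dd Q x1 + dd Q y"
  unfolding dd_alt by (auto split: if_splits nat_diff_split)

lemma phi_pow_step:
  assumes IHQ: "\<And>z. 1 \<le> z \<Longrightarrow> Q \<le> 2*z \<Longrightarrow> z \<le> 2*Q \<Longrightarrow> phi (Q + z) = dd Q z + phi z"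
    and Qev: "Q = 1 \<or> even Q" and x2: "x \<ge> 2" and hQx: "Q \<le> x" "x \<le> 4*Q"
  shows "phi (2*Q + x) = dd (2*Q) x + phi x"
proof -
  define x1 where "x1 = x div 2 + x mod 2"
  define y where "y = x div 2"
  have s1: "x1 + y = x" unfolding x1_def y_def by presburger
  have s2: "y \<le> x1" unfolding x1_def y_def by simp
  have s3: "x1 \<le> y + 1" unfolding x1_def y_def by presburger
  have y1: "y \<ge> 1" using x2 unfolding y_def by simp
  have x1Q: "x1 \<le> 2*Q" using hQx unfolding x1_def by presburger
  have yQ: "Q \<le> 2*y"
  proof (cases "Q = 1")
    case True then show ?thesis using y1 by simp
  next
    case False
    then obtain m where m: "Q = 2*m" using Qev by (auto elim!: evenE)
    then show ?thesis using hQx unfolding y_def by presburger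
  qed
  have e1: "phi (2*Q + x) = x mod 2 + phi (Q + x1) + phi (Q + y)"
  proof -
    have "phi (2*Q + x) = (2*Q+x) mod 2 + phi ((2*Q+x) div 2 + (2*Q+x) mod 2) + phi ((2*Q+x) div 2)"
      using x2 by (intro phi_ge2) simp
    moreover have "(2*Q+x) mod 2 = x mod 2" by simp
    moreover have "(2*Q+x) div 2 = Q + y" unfolding y_def by simp
    ultimately show ?thesis unfolding x1_def by (simp add: add.assoc)
  qed
  have i1: "phi (Q + x1) = dd Q x1 + phi x1"
    by (rule IHQ) (use s1 s2 hQx x1Q x2 in linarith)+
  have i2: "phi (Q + y) = dd Q y + phi y"
    by (rule IHQ) (use s1 s2 y1 yQ hQx x1Q x2 in linarith)+
  have e2: "phi x = x mod 2 + phi x1 + phi y"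
    using x2 unfolding x1_def y_def by (intro phi_ge2)
  have d: "dd (2*Q) x = dd Q x1 + dd Q y"
    using dd_split[OF s2 s3, of Q] s1 by simp
  show ?thesis using e1 e2 i1 i2 d by simp
qed

lemma phi_pow: "1 \<le> x \<Longrightarrow> 2^k \<le> 2*x \<Longrightarrow> x \<le> 2^(k+1) \<Longrightarrow> phi (2^k + x) = dd (2^k) x + phi x"
proof (induction k arbitrary: x)
  case 0
  then have "x = 1 \<or> x = 2" by auto
  then show ?case by (auto simp: dd_alt)
next
  case (Suc j)
  define Q :: nat where "Q = 2^j"
  have Q1: "Q \<ge> 1" unfolding Q_def by simp
  have Qev: "Q = 1 \<or> even Q" unfolding Q_def by (cases j) auto
  have PQ: "(2::nat)^(Suc j) = 2*Q" unfolding Q_def by simp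
  have IHQ: "\<And>z. 1 \<le> z \<Longrightarrow> Q \<le> 2*z \<Longrightarrow> z \<le> 2*Q \<Longrightarrow> phi (Q + z) = dd Q z + phi z"
    using Suc.IH unfolding Q_def by simp
  have hx: "2*Q \<le> 2*x" "x \<le> 4*Q" using Suc.prems PQ by auto
  show ?case
  proof (cases "x = 1")
    case True
    then have "Q = 1" using hx Q1 by auto
    then have "j = 0" unfolding Q_def by simp
    then show ?thesis using True by (simp add: dd_alt)
  next
    case False
    then have x2: "x \<ge> 2" using Suc.prems by auto
    have "phi (2*Q + x) = dd (2*Q) x + phi x"
      by (rule phi_pow_step[OF IHQ Qev x2]) (use hx in auto)
    then show ?thesis using PQ by simp
  qed
qed

definition pow2 :: "nat \<Rightarrow> bool" where "pow2 x \<longleftrightarrow> (\<exists>j. x = 2^j)"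

lemma pow2_eq: "pow2 x \<Longrightarrow> 2^k \<le> x \<Longrightarrow> x < 2^(k+1) \<Longrightarrow> x = (2::nat)^k"
proof -
  assume "pow2 x" "2^k \<le> x" "x < 2^(k+1)"
  then obtain j where j: "x = 2^j" unfolding pow2_def by auto
  have "k \<le> j" using j \<open>2^k \<le> x\<close> by (simp add: power_le_imp_le_exp)
  moreover have "(2::nat)^j < 2^(Suc k)" using j \<open>x < 2^(k+1)\<close> by simp
  then have "j < Suc k" by (rule power_less_imp_less_exp[rotated]) simp
  ultimately show ?thesis using j by simp
qed

lemma merge_phi:
  assumes "pow2 a \<or> pow2 b" "2^k \<le> a" "a \<le> 2^(k+1)" "2^k \<le> b" "b \<le> 2^(k+1)"
  shows "phi (a+b) = dd a b + phi a + phi b"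
proof -
  have gen: "phi (p+c) = dd p c + phi p + phi c" if h: "pow2 p" "2^k \<le> p" "p \<le> 2^(k+1)" "2^k \<le> c" "c \<le> 2^(k+1)" for p c
  proof -
    obtain j where j: "p = 2^j" using h unfolding pow2_def by auto
    have kj: "(2::nat)^k \<le> 2^j" using j h(2) by simp
    have h5: "c \<le> 2*2^k" using h(5) by simp
    have c2': "c \<le> 2*2^j" using kj h5 by linarith
    then have c2: "c \<le> 2^(j+1)" by simp
    have jk: "(2::nat)^j \<le> 2*2^k" using j h(3) by simp
    have c3: "2^j \<le> 2*c" using jk h(4) by linarith
    have "(1::nat) \<le> 2^k" by simp
    then have c1: "1 \<le> c" using h(4) by linarith
    show ?thesis using phi_pow[OF c1 c3 c2] j by simp
  qed
  show ?thesis
  proof (cases "pow2 a")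
    case True show ?thesis by (rule gen[OF True assms(2-5)])
  next
    case False
    then have pb: "pow2 b" using assms by simp
    have e: "phi (b+a) = dd b a + phi b + phi a" by (rule gen[OF pb assms(4,5,2,3)])
    have "phi (a+b) = phi (b+a)" by (simp add: add.commute)
    moreover have "dd a b = dd b a" by (rule dd_comm)
    ultimately show ?thesis using e by linarith
  qed
qed

lemma leaves_pos: "leaves t \<ge> 1" by (induction t) auto

lemma colless_node: "colless (Node l r) = dd (leaves l) (leaves r) + colless l + colless r"
  by (simp add: dd_def)

lemma colless_lower: "phi (leaves t) \<le> colless t"
proof (induction t)
  case Leaf then show ?case by simp
next
  case (Node l r)
  have "phi (leaves l + leaves r) \<le> dd (leaves l) (leaves r) + phi (leaves l) + phi (leaves r)"
    by (rule phi_sub)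
  moreover have "colless (Node l r) = dd (leaves l) (leaves r) + colless l + colless r" by (rule colless_node)
  moreover have "phi (leaves (Node l r)) = phi (leaves l + leaves r)" by simp
  ultimately show ?case using Node.IH by linarith
qed

lemma colless_upper: "colless t \<le> leaves t ^ 2"
proof (induction t)
  case Leaf then show ?case by simp
next
  case (Node l r)
  let ?l = "leaves l" and ?r = "leaves r"
  have "dd ?l ?r \<le> ?l + ?r" unfolding dd_alt by (auto split: if_splits nat_diff_split)
  moreover have "?l \<le> ?l * ?r" using leaves_pos[of r] by simp
  moreover have "?r \<le> ?l * ?r" using leaves_pos[of l] by simp
  moreover have "(?l + ?r)^2 = ?l^2 + ?r^2 + 2*(?l*?r)" by (simp add: power2_sum)
  moreover have "colless (Node l r) = dd ?l ?r + colless l + colless r" by (rule colless_node)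
  moreover have "leaves (Node l r) ^ 2 = (?l + ?r)^2" by simp
  ultimately show ?case using Node.IH by linarith
qed

definition np :: "btree multiset \<Rightarrow> btree multiset" where
  "np M = filter_mset (\<lambda>w. \<not> pow2 (leaves w)) M"

definition ginv :: "btree multiset \<Rightarrow> bool" where
  "ginv M \<longleftrightarrow> (\<exists>k. \<forall>w\<in>#M. 2^k \<le> leaves w \<and> leaves w \<le> 2^(k+1))
     \<and> size (np M) \<le> 1 \<and> (\<forall>w\<in>#M. colless w = phi (leaves w))"

lemma mset_two:
  assumes "u \<in># M" "v \<in># M - {#u#}"
  shows "M = add_mset u (add_mset v (M - {#u#} - {#v#}))"
proof -
  have e1: "add_mset v (M - {#u#} - {#v#}) = M - {#u#}" using assms(2) by (rule insert_DiffM)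
  have e2: "add_mset u (M - {#u#}) = M" using assms(1) by (rule insert_DiffM)
  show ?thesis unfolding e1 e2 ..
qed

lemma np_pair:
  assumes "size (np M) \<le> 1" "x \<in># M" "y \<in># M - {#x#}"
  shows "pow2 (leaves x) \<or> pow2 (leaves y)"
proof (rule ccontr)
  assume c: "\<not> (pow2 (leaves x) \<or> pow2 (leaves y))"
  have "M = add_mset x (add_mset y (M - {#x#} - {#y#}))"
    using assms(2,3) by (rule mset_two)
  then have "np M = add_mset x (add_mset y (np (M - {#x#} - {#y#})))"
    using c unfolding np_def by (metis filter_mset_add_mset)
  then have "size (np M) \<ge> 2" by simp
  then show False using assms(1) by simp
qed

lemma ex_min_mset:
  assumes "M \<noteq> {#}"
  obtains u where "u \<in># M" "\<forall>w\<in>#M. (f::btree \<Rightarrow> nat) u \<le> f w"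
proof -
  let ?A = "f ` set_mset M"
  have fin: "finite ?A" "?A \<noteq> {}" using assms by auto
  then have "Min ?A \<in> ?A" by (rule Min_in)
  then obtain u where u: "u \<in># M" "f u = Min ?A" by auto
  have "\<forall>w\<in>#M. f u \<le> f w" using u fin by auto
  then show ?thesis using that u by blast
qed

lemma gfb_exists: "M \<noteq> {#} \<Longrightarrow> \<exists>t. gfb_run M t"
proof (induction "size M" arbitrary: M rule: less_induct)
  case less
  show ?case
  proof (cases "size M = 1")
    case True
    then obtain t where "M = {#t#}" by (metis size_1_singleton_mset)
    then show ?thesis using gfb_run.finish by blast
  next
    case False
    have "size M \<noteq> 0" using less.prems by simp
    then have s2: "size M \<ge> 2" using False by presburger
    obtain u where u: "u \<in># M" "\<forall>w\<in>#M. leaves u \<le> leaves w"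
      using ex_min_mset[OF less.prems] by blast
    have "size (M - {#u#}) = size M - 1" using u by (simp add: size_Diff_singleton)
    then have ne: "M - {#u#} \<noteq> {#}" using s2 by auto
    obtain v where v: "v \<in># M - {#u#}" "\<forall>w\<in>#M - {#u#}. leaves v \<le> leaves w"
      using ex_min_mset[OF ne] by blast
    define N where "N = add_mset (Node u v) (M - {#u#} - {#v#})"
    have MM: "M = add_mset u (add_mset v (M - {#u#} - {#v#}))" by (rule mset_two[OF u(1) v(1)])
    have "size M = size (add_mset u (add_mset v (M - {#u#} - {#v#})))" using MM by (rule arg_cong)
    then have "size M = Suc (Suc (size (M - {#u#} - {#v#})))" by (simp only: size_add_mset)
    moreover have "size N = Suc (size (M - {#u#} - {#v#}))" unfolding N_def by (simp only: size_add_mset)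
    ultimately have "size N < size M" by simp
    moreover have "N \<noteq> {#}" unfolding N_def by simp
    ultimately have "size N < size M" "N \<noteq> {#}" by auto
    then obtain t where "gfb_run N t" using less.hyps by blast
    then have "gfb_run M t" using gfb_run.step[OF u(1) u(2) v(1) v(2)] unfolding N_def by blast
    then show ?thesis by blast
  qed
qed

lemma gfb_leaves: "gfb_run M t \<Longrightarrow> leaves t = (\<Sum>w\<in>#M. leaves w)"
proof (induction rule: gfb_run.induct)
  case (finish t) then show ?case by simp
next
  case (step u M v t)
  have "M = add_mset u (add_mset v (M - {#u#} - {#v#}))" using step.hyps(1,3) by (rule mset_two)
  then have "(\<Sum>w\<in>#M. leaves w) = leaves u + leaves v + (\<Sum>w\<in>#(M - {#u#} - {#v#}). leaves w)"
    by (metis (no_types, lifting) add.assoc image_mset_add_mset sum_mset.insert)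
  then show ?case using step.IH by simp
qed

lemma ginv_step:
  assumes g: "ginv M" and u: "u \<in># M" "\<forall>w\<in>#M. leaves u \<le> leaves w"
    and v: "v \<in># M - {#u#}" "\<forall>w\<in>#M - {#u#}. leaves v \<le> leaves w"
  shows "ginv (add_mset (Node u v) (M - {#u#} - {#v#}))"
proof -
  obtain k where K: "\<forall>w\<in>#M. 2^k \<le> leaves w \<and> leaves w \<le> 2^(k+1)" using g unfolding ginv_def by blast
  have P: "size (np M) \<le> 1" using g unfolding ginv_def by blast
  have C: "\<forall>w\<in>#M. colless w = phi (leaves w)" using g unfolding ginv_def by blast
  define R where "R = M - {#u#} - {#v#}"
  define a where "a = leaves u"
  define b where "b = leaves v"
  have vM: "v \<in># M" using v(1) by (rule in_diffD)
  have R1: "w \<in># M - {#u#}" if "w \<in># R" for w using that unfolding R_def by (rule in_diffD)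
  have Rc: "R = M - {#v#} - {#u#}" unfolding R_def by (rule diff_right_commute)
  have R2: "w \<in># M - {#v#}" if "w \<in># R" for w using that unfolding Rc by (rule in_diffD)
  have RM: "R \<subseteq># M" unfolding R_def
    by (rule subset_mset.order_trans[OF diff_subset_eq_self diff_subset_eq_self])
  have RinM: "w \<in># M" if "w \<in># R" for w using R1[OF that] by (rule in_diffD)
  have ab: "a \<le> b" using u(2) vM unfolding a_def b_def by blast
  have bR: "b \<le> leaves w" if "w \<in># R" for w using v(2) R1[OF that] unfolding b_def by blast
  have puv: "pow2 a \<or> pow2 b" using np_pair[OF P u(1) v(1)] unfolding a_def b_def .
  have Ka: "2^k \<le> a" "a \<le> 2^(k+1)" using K u(1) unfolding a_def by auto
  have Kb: "2^k \<le> b" "b \<le> 2^(k+1)" using K vM unfolding b_def by auto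
  have lnode: "leaves (Node u v) = a + b" unfolding a_def b_def by simp
  have cnew: "colless (Node u v) = phi (leaves (Node u v))"
  proof -
    have cu: "colless u = phi a" using C u(1) unfolding a_def by blast
    have cv: "colless v = phi b" using C vM unfolding b_def by blast
    have "colless (Node u v) = dd a b + colless u + colless v" unfolding a_def b_def by (rule colless_node)
    also have "\<dots> = dd a b + phi a + phi b" using cu cv by simp
    also have "\<dots> = phi (a+b)" using merge_phi[OF puv Ka Kb] by simp
    finally show ?thesis using lnode by simp
  qed
  have CN: "\<forall>w\<in>#add_mset (Node u v) R. colless w = phi (leaves w)" using cnew C RinM by auto
  have npsub: "size (np R) \<le> size (np M)" unfolding np_def
    by (rule size_mset_mono[OF multiset_filter_mono[OF RM]])
  have G: "ginv (add_mset (Node u v) R)"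
  proof (cases "\<exists>c\<in>#R. leaves c < 2^(k+1)")
    case True
    then obtain c where c: "c \<in># R" "leaves c < 2^(k+1)" by blast
    have cb: "b \<le> leaves c" using bR[OF c(1)] .
    have ck: "2^k \<le> leaves c" using K RinM[OF c(1)] by blast
    have "a = 2^k \<and> b = 2^k"
    proof (cases "pow2 (leaves c)")
      case True
      have "leaves c = 2^k" by (rule pow2_eq[OF True ck c(2)])
      then show ?thesis using Ka Kb ab cb by simp
    next
      case False
      have pa: "pow2 a" using np_pair[OF P u(1) R1[OF c(1)]] False unfolding a_def by blast
      have pb: "pow2 b" using np_pair[OF P vM R2[OF c(1)]] False unfolding b_def by blast
      have a2: "a < 2^(k+1)" using ab cb c(2) by linarith
      have b2: "b < 2^(k+1)" using cb c(2) by linarith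
      have "a = 2^k" by (rule pow2_eq[OF pa Ka(1) a2])
      moreover have "b = 2^k" by (rule pow2_eq[OF pb Kb(1) b2])
      ultimately show ?thesis by blast
    qed
    then have lnew: "leaves (Node u v) = 2^(k+1)" using lnode by simp
    then have pnew: "pow2 (leaves (Node u v))" unfolding pow2_def by blast
    have "np (add_mset (Node u v) R) = np R" using pnew unfolding np_def by simp
    then have S: "size (np (add_mset (Node u v) R)) \<le> 1" using npsub P by simp
    have B: "\<forall>w\<in>#add_mset (Node u v) R. 2^k \<le> leaves w \<and> leaves w \<le> 2^(k+1)"
      using lnew K RinM by auto
    show ?thesis unfolding ginv_def using S B CN by blast
  next
    case False
    have Rk: "leaves w = 2^(k+1)" if "w \<in># R" for w
    proof -
      have "\<not> leaves w < 2^(k+1)" using False that by blast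
      moreover have "leaves w \<le> 2^(k+1)" using K RinM[OF that] by blast
      ultimately show ?thesis by simp
    qed
    have allp: "\<forall>x\<in>#R. pow2 (leaves x)" using Rk unfolding pow2_def by blast
    have npR: "filter_mset (\<lambda>w. \<not> pow2 (leaves w)) R = {#}" using allp by simp
    have S: "size (np (add_mset (Node u v) R)) \<le> 1" unfolding np_def filter_mset_add_mset npR by simp
    have B: "\<forall>w\<in>#add_mset (Node u v) R. 2^(k+1) \<le> leaves w \<and> leaves w \<le> 2^(k+1+1)"
      using Rk Ka Kb lnode by auto
    show ?thesis unfolding ginv_def using S B CN by blast
  qed
  show ?thesis using G unfolding R_def .
qed

lemma gfb_col: "gfb_run M t \<Longrightarrow> ginv M \<Longrightarrow> colless t = phi (leaves t)"
proof (induction rule: gfb_run.induct)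
  case (finish t) then show ?case unfolding ginv_def by simp
next
  case (step u M v t)
  then show ?case using ginv_step by blast
qed

lemma ginv_init: "ginv (replicate_mset n Leaf)"
proof -
  have "pow2 1" unfolding pow2_def by (metis power_0)
  then have "np (replicate_mset n Leaf) = {#}" unfolding np_def by (induction n) auto
  moreover have "\<exists>k. \<forall>w\<in>#replicate_mset n Leaf. 2^k \<le> leaves w \<and> leaves w \<le> 2^(k+1)"
    by (rule exI[of _ 0]) auto
  ultimately show ?thesis unfolding ginv_def by auto
qed

theorem theorem5:
  fixes n :: nat
  assumes "n \<ge> 1"
  shows "(\<exists>t. is_gfb n t) \<and> (\<forall>t. is_gfb n t \<longrightarrow> colless t = min_colless n)"
proof -
  have ne: "replicate_mset n Leaf \<noteq> {#}" using assms by (cases n) auto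
  obtain t0 where t0: "is_gfb n t0" using gfb_exists[OF ne] unfolding is_gfb_def by blast
  have good: "colless t = phi n \<and> leaves t = n" if "is_gfb n t" for t
  proof -
    have r: "gfb_run (replicate_mset n Leaf) t" using that unfolding is_gfb_def .
    have "leaves t = n" using gfb_leaves[OF r] by simp
    moreover have "colless t = phi (leaves t)" using gfb_col[OF r ginv_init] .
    ultimately show ?thesis by simp
  qed
  define S where "S = {colless t | t. leaves t = n}"
  have "S \<subseteq> {..n^2}" unfolding S_def using colless_upper by fastforce
  then have fin: "finite S" using finite_subset by blast
  have lb: "\<And>y. y \<in> S \<Longrightarrow> phi n \<le> y" unfolding S_def using colless_lower by fastforce
  have mem: "phi n \<in> S" unfolding S_def using good[OF t0] by (metis (mono_tags, lifting) mem_Collect_eq)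
  have "min_colless n = phi n" unfolding min_colless_def S_def[symmetric] using Min_eqI[OF fin lb mem] .
  then show ?thesis using t0 good by auto
qed

end
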